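(* Let $q_1,\dots,q_8$ be the eight vertices $(\pm1,\pm1,\pm1)$ of a cube in $\mathbb{R}^3$, let $t\in(0,1)$ and let $q_{j+8}=tq_j$ for $j=1,\dots,8$. Suppose that positive masses $m_1,\dots,m_{16}$ placed at $q_1,\dots,q_{16}$ form a central configuration. Then $m_1=\dots=m_8$ and $m_9=\dots=m_{16}$.
   Context: A configuration $q=(q_1,\dots,q_N)$ of distinct points in $\mathbb{R}^3$ with masses $m_1,\dots,m_N$ is a central configuration if there exists $c\in\mathbb{R}$ such that $\sum_{j\neq i} m_j\left(\frac{1}{|q_j-q_i|^3}-c\right)(q_j-q_i)=0$ for all $i=1,\dots,N$. *)

theory Defs
  imports "HOL-Analysis.Analysis"
begin

definition central_configuration ::
  "nat \<Rightarrow> (nat \<Rightarrow> real) \<Rightarrow> (nat \<Rightarrow> real^3) \<Rightarrow> bool" where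
  "central_configuration N m q \<longleftrightarrow>
     (\<forall>i<N. \<forall>j<N. i \<noteq> j \<longrightarrow> q i \<noteq> q j) \<and>
     (\<exists>c::real. \<forall>i<N.
        (\<Sum>j\<in>{..<N} - {i}. (m j * (1 / norm (q j - q i) ^ 3 - c)) *\<^sub>R (q j - q i)) = 0)"

text \<open>The eight cube vertices (+-1,+-1,+-1), indexed by 0..7 (bit k of the index
 determines the sign of coordinate k).\<close>

definition cube_vertex :: "nat \<Rightarrow> real^3" where
  "cube_vertex j = vector [if odd j then -1 else 1,
                           if odd (j div 2) then -1 else 1,
                           if odd (j div 4) then -1 else 1]"

definition nested_cubes :: "real \<Rightarrow> nat \<Rightarrow> real^3" where
  "nested_cubes t j = (if j < 8 then cube_vertex j else t *\<^sub>R cube_vertex (j - 8))"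

end

theory Submission
  imports Defs
begin

lemma inv_cube_ub:
  fixes u g :: real assumes "0 < u" "0 < g"
  shows "1 / sqrt u ^ 3 \<le> (g^2 + u) / (2 * u^2 * g)"
proof -
  define s where "s = sqrt u"
  have s: "0 < s" "s^2 = u" using assms by (auto simp: s_def)
  have "2 * u^2 * g \<le> (g^2 + u) * s^3"
  proof -
    have "(g^2 + u) * s^3 - 2 * u^2 * g = s^3 * (g - s)^2"
      using s by (simp add: power2_eq_square power3_eq_cube algebra_simps)
    also have "\<dots> \<ge> 0" using s by simp
    finally show ?thesis by simp
  qed
  then show ?thesis using s assms unfolding s_def[symmetric]
    by (simp add: field_simps)
qed

lemma inv_cube_lb:
  fixes u g :: real assumes "0 < u" "0 < g"
  shows "2 * g / (u * (g^2 + u)) \<le> 1 / sqrt u ^ 3"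
proof -
  define s where "s = sqrt u"
  have s: "0 < s" "s^2 = u" using assms by (auto simp: s_def)
  have "2 * g * s^3 \<le> u * (g^2 + u)"
  proof -
    have "u * (g^2 + u) - 2 * g * s^3 = s^2 * (g - s)^2"
      using s by (simp add: power2_eq_square power3_eq_cube algebra_simps)
    also have "\<dots> \<ge> 0" by simp
    finally show ?thesis by simp
  qed
  moreover have "0 < u * (g^2 + u)" using assms by (intro mult_pos_pos add_nonneg_pos) auto
  moreover have "0 < s^3" using s by simp
  ultimately show ?thesis unfolding s_def[symmetric]
    by (simp add: divide_simps)
qed

lemma P1_frac:
  fixes w A B C E :: real
  assumes "w \<noteq> 0" "A \<noteq> 0" "B \<noteq> 0" "C \<noteq> 0" "E \<noteq> 0"
  shows "1 + 1/w^2 - 3*(C^2 + 3*A) / (2*A^2*C) - w * (3*(E^2 + 3*B) / (2*B^2*E))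
    = (w^2*(2*A^2*C)*(2*B^2*E) + (2*A^2*C)*(2*B^2*E) - w^2*(3*(C^2+3*A))*(2*B^2*E)
        - w^3*(3*(E^2+3*B))*(2*A^2*C)) / (w^2*(2*A^2*C)*(2*B^2*E))"
  using assms by (simp add: field_simps) (simp add: power2_eq_square power3_eq_cube algebra_simps)

lemma P1_key:
  fixes r w :: real assumes r: "0 \<le> r" and w_def: "w = 1 + r"
  shows "0 \<le> 1 + 1/w^2 - 3*((3+2*r)^2 + 3*(1+2*w^2)) / (2*(1+2*w^2)^2*(3+2*r))
            - w * (3*((3+r)^2 + 3*(2+w^2)) / (2*(2+w^2)^2*(3+r)))"
proof -
  have pos: "0 < w" "0 < 1+2*w^2" "0 < 2+w^2" "0 < 3+2*r" "0 < 3+r"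
    using r unfolding w_def by (auto intro: add_pos_nonneg)
  let ?A = "1+2*w^2" and ?B = "2+w^2" and ?C = "3+2*r" and ?E = "3+r"
  have eq: "(w^2*(2*?A^2*?C)*(2*?B^2*?E) + (2*?A^2*?C)*(2*?B^2*?E) - w^2*(3*(?C^2+3*?A))*(2*?B^2*?E)
        - w^3*(3*(?E^2+3*?B))*(2*?A^2*?C))
     = r^2 * (3888 + r*(19440 + r*(47376 + r*(72864 + r*(77188 + r*(58188 + r*(31372 + r*(11892 + r*(3024 + r*(464 + r*32))))))))))"
    unfolding w_def by (simp add: algebra_simps power2_eq_square power3_eq_cube)
  have N: "0 \<le> r^2 * (3888 + r*(19440 + r*(47376 + r*(72864 + r*(77188 + r*(58188 + r*(31372 + r*(11892 + r*(3024 + r*(464 + r*32))))))))))"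
    using r by (intro mult_nonneg_nonneg add_nonneg_nonneg) auto
  have D: "0 < w^2*(2*?A^2*?C)*(2*?B^2*?E)" using pos by simp
  show ?thesis
    apply (subst P1_frac)
    using pos apply simp_all
    using N D eq by simp
qed

lemma P2_frac:
  fixes w A B C E K :: real
  assumes "w \<noteq> 0" "A \<noteq> 0" "B \<noteq> 0" "C \<noteq> 0" "E \<noteq> 0" "K \<noteq> 0"
  shows "1 - 1/w^2 - (2+w) * (3*(E^2 + 3*B) / (2*B^2*E)) + (1+2*w) * (18*C / (A*K))
    = (w^2*(2*B^2*E)*(A*K) - (2*B^2*E)*(A*K)
        - w^2*(2+w)*(3*(E^2+3*B))*(A*K) + w^2*(1+2*w)*(18*C)*(2*B^2*E))
      / (w^2*(2*B^2*E)*(A*K))"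
  using assms by (simp add: field_simps)

lemma conv_ub:
  fixes U G :: real assumes "U \<noteq> 0" "G \<noteq> 0"
  shows "((G/3)^2 + U/3)/(2*(U/3)^2*(G/3)) = 3*(G^2+3*U)/(2*U^2*G)"
  using assms by (simp add: field_simps)

lemma conv_lb:
  fixes U G :: real assumes "U \<noteq> 0" "G \<noteq> 0" "G^2 + 3*U \<noteq> 0"
  shows "2*(G/3)/((U/3)*((G/3)^2+U/3)) = 18*G/(U*(G^2+3*U))"
proof -
  define K where "K = G^2 + 3*U"
  have "(G/3)^2+U/3 = K/9" by (simp add: K_def power2_eq_square field_simps)
  moreover have "K \<noteq> 0" using assms by (simp add: K_def)
  ultimately show ?thesis using assms unfolding K_def[symmetric]
    by (simp add: field_simps) (simp add: K_def algebra_simps power2_eq_square)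
qed

lemma P2_key:
  fixes r w :: real assumes r: "0 \<le> r" and w_def: "w = 1 + r"
  shows "0 \<le> 1 - 1/w^2 - (2+w) * (3*((3+r)^2 + 3*(2+w^2)) / (2*(2+w^2)^2*(3+r)))
            + (1+2*w) * (18*(3+2*r) / ((1+2*w^2)*((3+2*r)^2 + 3*(1+2*w^2))))"
proof -
  have pos: "0 < w" "0 < 1+2*w^2" "0 < 2+w^2" "0 < 3+2*r" "0 < 3+r" "0 < (3+2*r)^2 + 3*(1+2*w^2)"
    using r unfolding w_def by (auto intro: add_pos_nonneg add_nonneg_pos)
  let ?A = "1+2*w^2" and ?B = "2+w^2" and ?C = "3+2*r" and ?E = "3+r"
  have eq: "(w^2*(2*?B^2*?E)*(?A*(?C^2+3*?A)) - (2*?B^2*?E)*(?A*(?C^2+3*?A))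
        - w^2*(2+w)*(3*(?E^2+3*?B))*(?A*(?C^2+3*?A)) + w^2*(1+2*w)*(18*?C)*(2*?B^2*?E))
     = r^3 * (6480 + r*(24732 + r*(42300 + r*(42456 + r*(27448 + r*(11732 + r*(3252 + r*(536 + r*40))))))))"
    unfolding w_def by (simp add: algebra_simps power2_eq_square power3_eq_cube)
  have N: "0 \<le> r^3 * (6480 + r*(24732 + r*(42300 + r*(42456 + r*(27448 + r*(11732 + r*(3252 + r*(536 + r*40))))))))"
    using r by (intro mult_nonneg_nonneg add_nonneg_nonneg) auto
  have D: "0 < w^2*(2*?B^2*?E)*(?A*(?C^2+3*?A))" using pos by simp
  show ?thesis
    apply (subst P2_frac[where K="(3+2*r)^2 + 3*(1+2*w^2)"])
    using pos apply simp_all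
    using N D eq by simp
qed

lemma P1w:
  fixes w :: real assumes w: "1 < w"
  shows "0 \<le> 1 - 1/sqrt((1+2*w^2)/3)^3 - w/sqrt((2+w^2)/3)^3 + 1/w^2"
proof -
  define r where "r = w - 1"
  have r: "0 \<le> r" "w = 1 + r" using w by (auto simp: r_def)
  have pa: "0 < (2+w^2)/3" "0 < (3+r)/3" "0 < (1+2*w^2)/3" "0 < (3+2*r)/3"
    using r by (auto intro: add_pos_nonneg)
  have ba: "1/sqrt((2+w^2)/3)^3 \<le> 3*((3+r)^2 + 3*(2+w^2)) / (2*(2+w^2)^2*(3+r))"
  proof -
    have "1/sqrt((2+w^2)/3)^3 \<le> (((3+r)/3)^2 + (2+w^2)/3) / (2*((2+w^2)/3)^2*((3+r)/3))"
      by (rule inv_cube_ub) (use pa in auto)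
    also have "\<dots> = 3*((3+r)^2 + 3*(2+w^2)) / (2*(2+w^2)^2*(3+r))"
      by (rule conv_ub) (use pa in auto)
    finally show ?thesis .
  qed
  have bb: "1/sqrt((1+2*w^2)/3)^3 \<le> 3*((3+2*r)^2 + 3*(1+2*w^2)) / (2*(1+2*w^2)^2*(3+2*r))"
  proof -
    have "1/sqrt((1+2*w^2)/3)^3 \<le> (((3+2*r)/3)^2 + (1+2*w^2)/3) / (2*((1+2*w^2)/3)^2*((3+2*r)/3))"
      by (rule inv_cube_ub) (use pa in auto)
    also have "\<dots> = 3*((3+2*r)^2 + 3*(1+2*w^2)) / (2*(1+2*w^2)^2*(3+2*r))"
      by (rule conv_ub) (use pa in auto)
    finally show ?thesis .
  qed
  have "w/sqrt((2+w^2)/3)^3 = w * (1/sqrt((2+w^2)/3)^3)" by simp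
  also have "\<dots> \<le> w * (3*((3+r)^2 + 3*(2+w^2)) / (2*(2+w^2)^2*(3+r)))"
    using ba w by (intro mult_left_mono) auto
  finally have "w/sqrt((2+w^2)/3)^3 \<le> w * (3*((3+r)^2 + 3*(2+w^2)) / (2*(2+w^2)^2*(3+r)))" .
  with bb P1_key[OF r] show ?thesis by linarith
qed

lemma P2w:
  fixes w :: real assumes w: "1 < w"
  shows "0 \<le> 1 - 1/w^2 - (2+w)/sqrt((2+w^2)/3)^3 + (1+2*w)/sqrt((1+2*w^2)/3)^3"
proof -
  define r where "r = w - 1"
  have r: "0 \<le> r" "w = 1 + r" using w by (auto simp: r_def)
  have pa: "0 < (2+w^2)/3" "0 < (3+r)/3" "0 < (1+2*w^2)/3" "0 < (3+2*r)/3"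
    using r by (auto intro: add_pos_nonneg)
  have ba: "1/sqrt((2+w^2)/3)^3 \<le> 3*((3+r)^2 + 3*(2+w^2)) / (2*(2+w^2)^2*(3+r))"
  proof -
    have "1/sqrt((2+w^2)/3)^3 \<le> (((3+r)/3)^2 + (2+w^2)/3) / (2*((2+w^2)/3)^2*((3+r)/3))"
      by (rule inv_cube_ub) (use pa in auto)
    also have "\<dots> = 3*((3+r)^2 + 3*(2+w^2)) / (2*(2+w^2)^2*(3+r))"
      by (rule conv_ub) (use pa in auto)
    finally show ?thesis .
  qed
  have bb: "18*(3+2*r) / ((1+2*w^2)*((3+2*r)^2 + 3*(1+2*w^2))) \<le> 1/sqrt((1+2*w^2)/3)^3"
  proof -
    have "2*((3+2*r)/3) / (((1+2*w^2)/3) * (((3+2*r)/3)^2 + (1+2*w^2)/3)) \<le> 1/sqrt((1+2*w^2)/3)^3"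
      by (rule inv_cube_lb) (use pa in auto)
    moreover have "2*((3+2*r)/3) / (((1+2*w^2)/3) * (((3+2*r)/3)^2 + (1+2*w^2)/3))
       = 18*(3+2*r) / ((1+2*w^2)*((3+2*r)^2 + 3*(1+2*w^2)))"
    proof (rule conv_lb)
      have "0 < 3*(1+2*w^2)" using pa by simp
      then have "0 < (3+2*r)^2 + 3*(1+2*w^2)" by (intro add_nonneg_pos) auto
      then show "(3+2*r)^2 + 3*(1+2*w^2) \<noteq> 0" by simp
    qed (use pa in auto)
    ultimately show ?thesis by simp
  qed
  have "(2+w)/sqrt((2+w^2)/3)^3 = (2+w) * (1/sqrt((2+w^2)/3)^3)" by simp
  also have "\<dots> \<le> (2+w) * (3*((3+r)^2 + 3*(2+w^2)) / (2*(2+w^2)^2*(3+r)))"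
    using ba w by (intro mult_left_mono) auto
  finally have 1: "(2+w)/sqrt((2+w^2)/3)^3 \<le> (2+w) * (3*((3+r)^2 + 3*(2+w^2)) / (2*(2+w^2)^2*(3+r)))" .
  have "(1+2*w) * (18*(3+2*r) / ((1+2*w^2)*((3+2*r)^2 + 3*(1+2*w^2)))) \<le> (1+2*w) * (1/sqrt((1+2*w^2)/3)^3)"
    using bb w by (intro mult_left_mono) auto
  also have "\<dots> = (1+2*w)/sqrt((1+2*w^2)/3)^3" by simp
  finally have 2: "(1+2*w) * (18*(3+2*r) / ((1+2*w^2)*((3+2*r)^2 + 3*(1+2*w^2)))) \<le> (1+2*w)/sqrt((1+2*w^2)/3)^3" .
  from 1 2 P2_key[OF r] show ?thesis by linarith
qed

definition s1 :: "nat \<Rightarrow> real" where "s1 j = (if odd j then -1 else 1)"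
definition s2 :: "nat \<Rightarrow> real" where "s2 j = (if odd (j div 2) then -1 else 1)"
definition s3 :: "nat \<Rightarrow> real" where "s3 j = (if odd (j div 4) then -1 else 1)"
definition ham :: "nat \<Rightarrow> nat \<Rightarrow> nat" where
  "ham i j = (if odd i = odd j then 0 else 1) + (if odd (i div 2) = odd (j div 2) then 0 else 1)
            + (if odd (i div 4) = odd (j div 4) then 0 else 1)"
definition Gf :: "nat \<Rightarrow> real" where "Gf h = 1 / (2 * sqrt (real h)) ^ 3"
definition Ef :: "real \<Rightarrow> nat \<Rightarrow> real" where "Ef t h = 1 / sqrt (3 * (1 - t)^2 + 4 * t * real h) ^ 3"

lemma norm3: "norm (x::real^3) = sqrt (x$1^2 + x$2^2 + x$3^2)"
  by (simp add: norm_vec_def L2_set_def sum_3)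

lemma cv_comp: "cube_vertex j $ 1 = s1 j" "cube_vertex j $ 2 = s2 j" "cube_vertex j $ 3 = s3 j"
  by (simp_all add: cube_vertex_def s1_def s2_def s3_def)

lemma sq_diff: "(a * s - b * s') ^ 2 = (a - b)^2 + 4 * a * b * (if s = s' then 0 else 1)"
  if "s = 1 \<or> s = -1" "s' = 1 \<or> s' = -1" for a b s s' :: real
  using that by (auto simp: power2_eq_square algebra_simps)

lemma ham_sum: "real (ham i j) = (if s1 j = s1 i then 0 else 1) + (if s2 j = s2 i then 0 else 1) + (if s3 j = s3 i then 0 else 1)"
  by (auto simp: ham_def s1_def s2_def s3_def)

lemma s_cases: "s1 j = 1 \<or> s1 j = -1" "s2 j = 1 \<or> s2 j = -1" "s3 j = 1 \<or> s3 j = -1"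
  by (simp_all add: s1_def s2_def s3_def)

lemma norm_gen: "norm (a *\<^sub>R cube_vertex j - b *\<^sub>R cube_vertex i) = sqrt (3 * (a - b)^2 + 4 * a * b * real (ham i j))"
proof -
  have "norm (a *\<^sub>R cube_vertex j - b *\<^sub>R cube_vertex i)
     = sqrt ((a * s1 j - b * s1 i)^2 + (a * s2 j - b * s2 i)^2 + (a * s3 j - b * s3 i)^2)"
    by (simp add: norm3 cv_comp)
  also have "\<dots> = sqrt (3 * (a - b)^2 + 4 * a * b * real (ham i j))"
    unfolding ham_sum
    by (simp add: sq_diff s_cases algebra_simps)
  finally show ?thesis .
qed

lemma sum16: "(\<Sum>j<16. f j) = (\<Sum>j<8. f j) + (\<Sum>j<8. f (j+8::nat))" for f :: "nat \<Rightarrow> 'a::comm_monoid_add"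
proof -
  have "(\<Sum>j<16. f j) = sum f {0..<16}" by (simp only: lessThan_atLeast0)
  also have "\<dots> = sum f {0..<8} + sum f {8..<16}"
    by (rule sum.atLeastLessThan_concat[symmetric]) simp_all
  also have "sum f {8..<16} = (\<Sum>j\<in>{0..<8}. f (j+8))"
    using sum.shift_bounds_nat_ivl[of f 0 8 8] by (simp only: add_0 numeral_Bit0 numeral_plus_numeral)
  finally show ?thesis by (simp only: lessThan_atLeast0)
qed

lemma nc_out: "j < 8 \<Longrightarrow> nested_cubes t j = 1 *\<^sub>R cube_vertex j"
  by (simp add: nested_cubes_def)
lemma nc_in: "nested_cubes t (j + 8) = t *\<^sub>R cube_vertex j"
  by (simp add: nested_cubes_def)

lemma inv_oo: "1 / norm (1 *\<^sub>R cube_vertex j - 1 *\<^sub>R cube_vertex i) ^ 3 = Gf (ham i j)"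
  unfolding norm_gen Gf_def by (simp add: real_sqrt_mult)
lemma inv_oi: "1 / norm (t *\<^sub>R cube_vertex j - 1 *\<^sub>R cube_vertex i) ^ 3 = Ef t (ham i j)"
  unfolding norm_gen Ef_def by (simp add: power2_commute)
lemma inv_io: "1 / norm (1 *\<^sub>R cube_vertex j - t *\<^sub>R cube_vertex i) ^ 3 = Ef t (ham i j)"
  unfolding norm_gen Ef_def by simp
lemma inv_ii: "0 < t \<Longrightarrow> 1 / norm (t *\<^sub>R cube_vertex j - t *\<^sub>R cube_vertex i) ^ 3 = Gf (ham i j) / t^3"
proof -
  assume t: "0 < t"
  have "3*(t-t)^2 + 4*t*t*real(ham i j) = (2*t)^2 * real (ham i j)" by (simp add: power2_eq_square)
  then have "sqrt (3*(t-t)^2 + 4*t*t*real(ham i j)) = (2*t) * sqrt (real (ham i j))"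
    using t by (simp add: real_sqrt_mult)
  then have n: "norm (t *\<^sub>R cube_vertex j - t *\<^sub>R cube_vertex i) = t * (2 * sqrt (real (ham i j)))"
    unfolding norm_gen by simp
  have "(t * (2 * sqrt (real (ham i j)))) ^ 3 = t^3 * (2 * sqrt (real (ham i j))) ^ 3"
    by (rule power_mult_distrib)
  then show ?thesis unfolding n Gf_def by simp
qed

lemma eq_out:
  assumes t: "0 < t" and i: "i < 8"
    and hc: "(\<Sum>j\<in>{..<16} - {i}. (m j * (1 / norm (nested_cubes t j - nested_cubes t i) ^ 3 - c)) *\<^sub>R (nested_cubes t j - nested_cubes t i)) = 0"
  shows "(\<Sum>j<8. m j * (Gf (ham i j) - c) * (1 * cube_vertex j $ k - 1 * cube_vertex i $ k))
       + (\<Sum>j<8. m (j+8) * (Ef t (ham i j) - c) * (t * cube_vertex j $ k - 1 * cube_vertex i $ k)) = 0"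
proof -
  define f where "f j = (m j * (1 / norm (nested_cubes t j - nested_cubes t i) ^ 3 - c)) *\<^sub>R (nested_cubes t j - nested_cubes t i)" for j
  have "(\<Sum>j<16. f j) = f i + (\<Sum>j\<in>{..<16} - {i}. f j)"
    using i by (intro sum.remove) auto
  also have "f i = 0" by (simp add: f_def)
  finally have "(\<Sum>j<16. f j) = 0" using hc by (simp add: f_def)
  then have E0: "(\<Sum>j<8. f j) + (\<Sum>j<8. f (j+8)) = 0"
    unfolding sum16 .
  have "((\<Sum>j<8. f j) + (\<Sum>j<8. f (j+8))) $ k = 0" unfolding E0 by simp
  then have "(\<Sum>j<8. f j $ k) + (\<Sum>j<8. f (j+8) $ k) = 0" by simp
  moreover have "(\<Sum>j<8. f j $ k) = (\<Sum>j<8. m j * (Gf (ham i j) - c) * (1 * cube_vertex j $ k - 1 * cube_vertex i $ k))"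
  proof (rule sum.cong)
    fix j :: nat assume "j \<in> {..<8}"
    then show "f j $ k = m j * (Gf (ham i j) - c) * (1 * cube_vertex j $ k - 1 * cube_vertex i $ k)"
    proof -
      from \<open>j \<in> {..<8}\<close> have "nested_cubes t j = 1 *\<^sub>R cube_vertex j" by (simp add: nc_out)
      moreover have "nested_cubes t i = 1 *\<^sub>R cube_vertex i" using i by (simp add: nc_out)
      ultimately show ?thesis unfolding f_def by (simp only: inv_oo) simp
    qed
  qed simp
  moreover have "(\<Sum>j<8. f (j+8) $ k) = (\<Sum>j<8. m (j+8) * (Ef t (ham i j) - c) * (t * cube_vertex j $ k - 1 * cube_vertex i $ k))"
  proof (rule sum.cong)
    fix j :: nat assume "j \<in> {..<8}"
    then show "f (j+8) $ k = m (j+8) * (Ef t (ham i j) - c) * (t * cube_vertex j $ k - 1 * cube_vertex i $ k)"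
    proof -
      have "nested_cubes t i = 1 *\<^sub>R cube_vertex i" using i by (simp add: nc_out)
      then show ?thesis unfolding f_def by (simp only: nc_in inv_oi) simp
    qed
  qed simp
  ultimately show ?thesis by linarith
qed

lemma eq_in:
  assumes t: "0 < t" and i: "i < 8"
    and hc: "(\<Sum>j\<in>{..<16} - {i+8}. (m j * (1 / norm (nested_cubes t j - nested_cubes t (i+8)) ^ 3 - c)) *\<^sub>R (nested_cubes t j - nested_cubes t (i+8))) = 0"
  shows "(\<Sum>j<8. m j * (Ef t (ham i j) - c) * (1 * cube_vertex j $ k - t * cube_vertex i $ k))
       + (\<Sum>j<8. m (j+8) * (Gf (ham i j) / t^3 - c) * (t * cube_vertex j $ k - t * cube_vertex i $ k)) = 0"
proof -
  define f where "f j = (m j * (1 / norm (nested_cubes t j - nested_cubes t (i+8)) ^ 3 - c)) *\<^sub>R (nested_cubes t j - nested_cubes t (i+8))" for j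
  have "(\<Sum>j<16. f j) = f (i+8) + (\<Sum>j\<in>{..<16} - {i+8}. f j)"
    using i by (intro sum.remove) auto
  also have "f (i+8) = 0" by (simp add: f_def)
  finally have "(\<Sum>j<16. f j) = 0" using hc by (simp add: f_def)
  then have E0: "(\<Sum>j<8. f j) + (\<Sum>j<8. f (j+8)) = 0"
    unfolding sum16 .
  have "((\<Sum>j<8. f j) + (\<Sum>j<8. f (j+8))) $ k = 0" unfolding E0 by simp
  then have "(\<Sum>j<8. f j $ k) + (\<Sum>j<8. f (j+8) $ k) = 0" by simp
  moreover have "(\<Sum>j<8. f j $ k) = (\<Sum>j<8. m j * (Ef t (ham i j) - c) * (1 * cube_vertex j $ k - t * cube_vertex i $ k))"
  proof (rule sum.cong)
    fix j :: nat assume "j \<in> {..<8}"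
    then show "f j $ k = m j * (Ef t (ham i j) - c) * (1 * cube_vertex j $ k - t * cube_vertex i $ k)"
    proof -
      from \<open>j \<in> {..<8}\<close> have "nested_cubes t j = 1 *\<^sub>R cube_vertex j" by (simp add: nc_out)
      then show ?thesis unfolding f_def by (simp only: nc_in inv_io) simp
    qed
  qed simp
  moreover have "(\<Sum>j<8. f (j+8) $ k) = (\<Sum>j<8. m (j+8) * (Gf (ham i j) / t^3 - c) * (t * cube_vertex j $ k - t * cube_vertex i $ k))"
  proof (rule sum.cong)
    fix j :: nat assume "j \<in> {..<8}"
    then show "f (j+8) $ k = m (j+8) * (Gf (ham i j) / t^3 - c) * (t * cube_vertex j $ k - t * cube_vertex i $ k)"
      unfolding f_def using i t by (simp only: nc_in inv_ii) simp
  qed simp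
  ultimately show ?thesis by linarith
qed

lemma sqrt_scale:
  fixes p c x :: real assumes "0 < p" "0 \<le> c" "x = 3 * p^2 * c"
  shows "sqrt x = sqrt 3 * p * sqrt c"
  using assms by (simp add: real_sqrt_mult)

lemma lin1: "p*K - (p*w)*(K*A) - p*(K*B) + (p*w)*(K*z) = (p*K)*(1 - B - w*A + y)"
  if "w*z = y" for p K A B w z y :: real
  unfolding that[symmetric] by (simp add: algebra_simps)

lemma lin2: "p*K - (p*(2+w))*(K*A) + (p*(1+2*w))*(K*B) - (p*w)*(K*z) = (p*K)*(1 - y - (2+w)*A + (1+2*w)*B)"
  if "w*z = y" for p K A B w z y :: real
  unfolding that[symmetric] by (simp add: algebra_simps)

lemma Ef_ineqs:
  fixes t :: real assumes t0: "0 < t" and t1: "t < 1"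
  shows "0 \<le> (1-t)*Ef t 0 - (1+t)*Ef t 1 - (1-t)*Ef t 2 + (1+t)*Ef t 3"
    and "0 \<le> (1-t)*Ef t 0 - (3-t)*Ef t 1 + (3+t)*Ef t 2 - (1+t)*Ef t 3"
proof -
  define p where "p = 1 - t"
  define w where "w = (1+t)/(1-t)"
  have p: "0 < p" using t1 by (simp add: p_def)
  have pw: "p * w = 1 + t" using t1 by (simp add: p_def w_def)
  have w1: "1 < w" using t0 t1 by (simp add: w_def)
  define K where "K = 1 / (sqrt 3 * p)^3"
  have K: "0 < K" using p by (simp add: K_def)
  define A where "A = 1 / sqrt ((2+w^2)/3) ^ 3"
  define B where "B = 1 / sqrt ((1+2*w^2)/3) ^ 3"
  have ga: "0 \<le> (2+w^2)/3" "0 \<le> (1+2*w^2)/3" by (auto intro: add_nonneg_nonneg)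
  have e0: "Ef t 0 = K"
  proof -
    have "sqrt (3*(1-t)^2 + 4*t*real (0::nat)) = sqrt 3 * p * sqrt 1"
      by (rule sqrt_scale) (use p in \<open>auto simp: p_def\<close>)
    then show ?thesis unfolding Ef_def K_def by simp
  qed
  have e1: "Ef t 1 = K * A"
  proof -
    have "3*p^2*((2+w^2)/3) = 2*p^2 + (p*w)^2" by (simp add: power2_eq_square algebra_simps)
    also have "\<dots> = 3*(1-t)^2 + 4*t*real (1::nat)" by (simp only: pw) (simp add: p_def power2_eq_square algebra_simps)
    finally have "sqrt (3*(1-t)^2 + 4*t*real (1::nat)) = sqrt 3 * p * sqrt ((2+w^2)/3)"
      by (intro sqrt_scale p ga) simp
    then show ?thesis unfolding Ef_def K_def A_def by (simp add: power_mult_distrib)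
  qed
  have e2: "Ef t 2 = K * B"
  proof -
    have "3*p^2*((1+2*w^2)/3) = p^2 + 2*(p*w)^2" by (simp add: power2_eq_square algebra_simps)
    also have "\<dots> = 3*(1-t)^2 + 4*t*real (2::nat)" by (simp only: pw) (simp add: p_def power2_eq_square algebra_simps)
    finally have "sqrt (3*(1-t)^2 + 4*t*real (2::nat)) = sqrt 3 * p * sqrt ((1+2*w^2)/3)"
      by (intro sqrt_scale p ga) simp
    then show ?thesis unfolding Ef_def K_def B_def by (simp add: power_mult_distrib)
  qed
  have e3: "Ef t 3 = K * (1 / w^3)"
  proof -
    have "3*p^2*(w^2) = 3*(p*w)^2" by (simp add: power2_eq_square algebra_simps)
    also have "\<dots> = 3*(1-t)^2 + 4*t*real (3::nat)" by (simp only: pw) (simp add: p_def power2_eq_square algebra_simps)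
    finally have "sqrt (3*(1-t)^2 + 4*t*real (3::nat)) = sqrt 3 * p * sqrt (w^2)"
      by (intro sqrt_scale p) simp_all
    then show ?thesis unfolding Ef_def K_def using w1 by (simp add: power_mult_distrib)
  qed
  have q: "1 + t = p * w" using pw by simp
  have "(1-t)*Ef t 0 - (1+t)*Ef t 1 - (1-t)*Ef t 2 + (1+t)*Ef t 3
      = (p*K) * (1 - B - w*A + 1/w^2)"
    unfolding e0 e1 e2 e3 q p_def[symmetric] by (rule lin1) (use w1 in \<open>simp add: power2_eq_square power3_eq_cube\<close>)
  moreover have "0 \<le> 1 - B - w*A + 1/w^2" using P1w[OF w1] unfolding A_def B_def by simp
  ultimately show "0 \<le> (1-t)*Ef t 0 - (1+t)*Ef t 1 - (1-t)*Ef t 2 + (1+t)*Ef t 3"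
    using p K by simp
  have q3: "3 - t = p * (2 + w)" "3 + t = p * (1 + 2*w)" using pw by (simp_all add: p_def algebra_simps)
  have "(1-t)*Ef t 0 - (3-t)*Ef t 1 + (3+t)*Ef t 2 - (1+t)*Ef t 3
      = (p*K) * (1 - 1/w^2 - (2+w)*A + (1+2*w)*B)"
    unfolding e0 e1 e2 e3 q q3 p_def[symmetric] by (rule lin2) (use w1 in \<open>simp add: power2_eq_square power3_eq_cube\<close>)
  moreover have "0 \<le> 1 - 1/w^2 - (2+w)*A + (1+2*w)*B" using P2w[OF w1] unfolding A_def B_def by simp
  ultimately show "0 \<le> (1-t)*Ef t 0 - (3-t)*Ef t 1 + (3+t)*Ef t 2 - (1+t)*Ef t 3"
    using p K by simp
qed

lemma Ef_mono:
  fixes t :: real assumes "0 < t" "t < 1" "h \<le> h'"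
  shows "Ef t h' \<le> Ef t h"
proof -
  have a: "0 < 3*(1-t)^2 + 4*t*real h" using assms by (intro add_pos_nonneg) auto
  have a': "0 < 3*(1-t)^2 + 4*t*real h'" using assms by (intro add_pos_nonneg) auto
  have "3*(1-t)^2 + 4*t*real h \<le> 3*(1-t)^2 + 4*t*real h'" using assms by simp
  then have "sqrt (3*(1-t)^2 + 4*t*real h) \<le> sqrt (3*(1-t)^2 + 4*t*real h')" by simp
  then have "sqrt (3*(1-t)^2 + 4*t*real h) ^ 3 \<le> sqrt (3*(1-t)^2 + 4*t*real h') ^ 3"
    by (intro power_mono) (use a in auto)
  moreover have "0 < sqrt (3*(1-t)^2 + 4*t*real h) ^ 3" using a by simp
  moreover have "0 < sqrt (3*(1-t)^2 + 4*t*real h') ^ 3" using a' by simp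
  ultimately show ?thesis unfolding Ef_def by (intro divide_left_mono mult_pos_pos) auto
qed

lemma eight: "{..<8::nat} = {0,1,2,3,4,5,6,7}" by auto

lemma walsh1:
  fixes x y F H :: "nat \<Rightarrow> real" and a b a' b' :: real
  shows "(\<Sum>i<8. s1 i * s2 i * ((\<Sum>j<8. x j * F (ham i j) * (a * s2 j - b * s2 i))
             + (\<Sum>j<8. y j * H (ham i j) * (a' * s2 j - b' * s2 i))))
       = (\<Sum>j<8. s1 j * x j) * (a * (F 0 - F 1 - F 2 + F 3) - b * (F 0 + F 1 - F 2 - F 3))
         + (\<Sum>j<8. s1 j * y j) * (a' * (H 0 - H 1 - H 2 + H 3) - b' * (H 0 + H 1 - H 2 - H 3))"
  unfolding eight by (simp add: s1_def s2_def s3_def ham_def) (simp add: algebra_simps numeral_eq_Suc)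

lemma walsh2:
  fixes x y F H :: "nat \<Rightarrow> real" and a b a' b' :: real
  shows "(\<Sum>i<8. s2 i * s3 i * ((\<Sum>j<8. x j * F (ham i j) * (a * s3 j - b * s3 i))
             + (\<Sum>j<8. y j * H (ham i j) * (a' * s3 j - b' * s3 i))))
       = (\<Sum>j<8. s2 j * x j) * (a * (F 0 - F 1 - F 2 + F 3) - b * (F 0 + F 1 - F 2 - F 3))
         + (\<Sum>j<8. s2 j * y j) * (a' * (H 0 - H 1 - H 2 + H 3) - b' * (H 0 + H 1 - H 2 - H 3))"
  unfolding eight by (simp add: s1_def s2_def s3_def ham_def) (simp add: algebra_simps numeral_eq_Suc)

lemma walsh3:
  fixes x y F H :: "nat \<Rightarrow> real" and a b a' b' :: real
  shows "(\<Sum>i<8. s3 i * s1 i * ((\<Sum>j<8. x j * F (ham i j) * (a * s1 j - b * s1 i))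
             + (\<Sum>j<8. y j * H (ham i j) * (a' * s1 j - b' * s1 i))))
       = (\<Sum>j<8. s3 j * x j) * (a * (F 0 - F 1 - F 2 + F 3) - b * (F 0 + F 1 - F 2 - F 3))
         + (\<Sum>j<8. s3 j * y j) * (a' * (H 0 - H 1 - H 2 + H 3) - b' * (H 0 + H 1 - H 2 - H 3))"
  unfolding eight by (simp add: s1_def s2_def s3_def ham_def) (simp add: algebra_simps numeral_eq_Suc)

lemma walsh12:
  fixes x y F H :: "nat \<Rightarrow> real" and a b a' b' :: real
  shows "(\<Sum>i<8. s1 i * s2 i * s1 i * ((\<Sum>j<8. x j * F (ham i j) * (a * s1 j - b * s1 i))
             + (\<Sum>j<8. y j * H (ham i j) * (a' * s1 j - b' * s1 i))))
       = (\<Sum>j<8. s1 j * s2 j * x j) * (a * (F 0 + F 1 - F 2 - F 3) - b * (F 0 - F 1 - F 2 + F 3))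
         + (\<Sum>j<8. s1 j * s2 j * y j) * (a' * (H 0 + H 1 - H 2 - H 3) - b' * (H 0 - H 1 - H 2 + H 3))"
  unfolding eight by (simp add: s1_def s2_def s3_def ham_def) (simp add: algebra_simps numeral_eq_Suc)

lemma walsh13:
  fixes x y F H :: "nat \<Rightarrow> real" and a b a' b' :: real
  shows "(\<Sum>i<8. s1 i * s3 i * s1 i * ((\<Sum>j<8. x j * F (ham i j) * (a * s1 j - b * s1 i))
             + (\<Sum>j<8. y j * H (ham i j) * (a' * s1 j - b' * s1 i))))
       = (\<Sum>j<8. s1 j * s3 j * x j) * (a * (F 0 + F 1 - F 2 - F 3) - b * (F 0 - F 1 - F 2 + F 3))
         + (\<Sum>j<8. s1 j * s3 j * y j) * (a' * (H 0 + H 1 - H 2 - H 3) - b' * (H 0 - H 1 - H 2 + H 3))"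
  unfolding eight by (simp add: s1_def s2_def s3_def ham_def) (simp add: algebra_simps numeral_eq_Suc)

lemma walsh23:
  fixes x y F H :: "nat \<Rightarrow> real" and a b a' b' :: real
  shows "(\<Sum>i<8. s2 i * s3 i * s2 i * ((\<Sum>j<8. x j * F (ham i j) * (a * s2 j - b * s2 i))
             + (\<Sum>j<8. y j * H (ham i j) * (a' * s2 j - b' * s2 i))))
       = (\<Sum>j<8. s2 j * s3 j * x j) * (a * (F 0 + F 1 - F 2 - F 3) - b * (F 0 - F 1 - F 2 + F 3))
         + (\<Sum>j<8. s2 j * s3 j * y j) * (a' * (H 0 + H 1 - H 2 - H 3) - b' * (H 0 - H 1 - H 2 + H 3))"
  unfolding eight by (simp add: s1_def s2_def s3_def ham_def) (simp add: algebra_simps numeral_eq_Suc)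

lemma walsh123:
  fixes x y F H :: "nat \<Rightarrow> real" and a b a' b' :: real
  shows "(\<Sum>i<8. s1 i * s2 i * s3 i * s1 i * ((\<Sum>j<8. x j * F (ham i j) * (a * s1 j - b * s1 i))
             + (\<Sum>j<8. y j * H (ham i j) * (a' * s1 j - b' * s1 i))))
       = (\<Sum>j<8. s1 j * s2 j * s3 j * x j) * (a * (F 0 - F 1 - F 2 + F 3) - b * (F 0 - 3 * F 1 + 3 * F 2 - F 3))
         + (\<Sum>j<8. s1 j * s2 j * s3 j * y j) * (a' * (H 0 - H 1 - H 2 + H 3) - b' * (H 0 - 3 * H 1 + 3 * H 2 - H 3))"
  unfolding eight by (simp add: s1_def s2_def s3_def ham_def) (simp add: algebra_simps numeral_eq_Suc)

lemma cramer:
  fixes M N a b c d :: real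
  assumes "M * a + N * b = 0" "M * c + N * d = 0" "a * d - b * c \<noteq> 0"
  shows "M = 0 \<and> N = 0"
proof -
  have "M * (a * d - b * c) = d * (M * a + N * b) - b * (M * c + N * d)" by (simp add: algebra_simps)
  also have "\<dots> = 0" using assms by simp
  finally have M: "M = 0" using assms(3) by simp
  have "N * (a * d - b * c) = a * (M * c + N * d) - c * (M * a + N * b)" by (simp add: algebra_simps)
  also have "\<dots> = 0" using assms by simp
  finally have "N = 0" using assms(3) by simp
  with M show ?thesis by simp
qed

lemma class1:
  fixes M N c t :: real and G E :: "nat \<Rightarrow> real"
  assumes eo: "M * (1 * ((G 0 - c) - (G 1 - c) - (G 2 - c) + (G 3 - c)) - 1 * ((G 0 - c) + (G 1 - c) - (G 2 - c) - (G 3 - c))) + N * (t * ((E 0 - c) - (E 1 - c) - (E 2 - c) + (E 3 - c)) - 1 * ((E 0 - c) + (E 1 - c) - (E 2 - c) - (E 3 - c))) = 0"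
    and ei: "M * (1 * ((E 0 - c) - (E 1 - c) - (E 2 - c) + (E 3 - c)) - t * ((E 0 - c) + (E 1 - c) - (E 2 - c) - (E 3 - c))) + N * (t * ((G 0 / t^3 - c) - (G 1 / t^3 - c) - (G 2 / t^3 - c) + (G 3 / t^3 - c)) - t * ((G 0 / t^3 - c) + (G 1 / t^3 - c) - (G 2 / t^3 - c) - (G 3 / t^3 - c))) = 0"
    and t: "0 < t" and dpos: "0 < (G 1 - G 3)" and P: "0 \<le> ((E 0 + E 1 - E 2 - E 3) - t * (E 0 - E 1 - E 2 + E 3))" and Q: "0 \<le> ((E 0 - E 1 - E 2 + E 3) - t * (E 0 + E 1 - E 2 - E 3))"
  shows "M = 0 \<and> N = 0"
proof (rule cramer)
  show "M * (-2 * (G 1 - G 3)) + N * (- ((E 0 + E 1 - E 2 - E 3) - t * (E 0 - E 1 - E 2 + E 3))) = 0" by (rule trans[OF _ eo]) (simp add: algebra_simps)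
  show "M * ((E 0 - E 1 - E 2 + E 3) - t * (E 0 + E 1 - E 2 - E 3)) + N * (-2 * t * (G 1 / t^3 - G 3 / t^3)) = 0" by (rule trans[OF _ ei]) (simp add: algebra_simps)
  have dp: "(G 1 / t^3 - G 3 / t^3) = (G 1 - G 3) / t^3" by (simp add: diff_divide_distrib add_divide_distrib)
  have "0 < (G 1 - G 3) * ((G 1 - G 3) / t^3)" using t dpos by simp
  have "0 < 4 * t * ((G 1 - G 3) * (G 1 / t^3 - G 3 / t^3))" unfolding dp using t dpos by (intro mult_pos_pos) auto
  moreover have "0 \<le> ((E 0 + E 1 - E 2 - E 3) - t * (E 0 - E 1 - E 2 + E 3)) * ((E 0 - E 1 - E 2 + E 3) - t * (E 0 + E 1 - E 2 - E 3))" using P Q by simp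
  moreover have "(-2 * (G 1 - G 3)) * (-2 * t * (G 1 / t^3 - G 3 / t^3)) - (- ((E 0 + E 1 - E 2 - E 3) - t * (E 0 - E 1 - E 2 + E 3))) * ((E 0 - E 1 - E 2 + E 3) - t * (E 0 + E 1 - E 2 - E 3)) = 4 * t * ((G 1 - G 3) * (G 1 / t^3 - G 3 / t^3)) + ((E 0 + E 1 - E 2 - E 3) - t * (E 0 - E 1 - E 2 + E 3)) * ((E 0 - E 1 - E 2 + E 3) - t * (E 0 + E 1 - E 2 - E 3))"
    using t by (simp add: field_simps)
  ultimately show "(-2 * (G 1 - G 3)) * (-2 * t * (G 1 / t^3 - G 3 / t^3)) - (- ((E 0 + E 1 - E 2 - E 3) - t * (E 0 - E 1 - E 2 + E 3))) * ((E 0 - E 1 - E 2 + E 3) - t * (E 0 + E 1 - E 2 - E 3)) \<noteq> 0" by linarith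
qed

lemma class2:
  fixes M N c t :: real and G E :: "nat \<Rightarrow> real"
  assumes eo: "M * (1 * ((G 0 - c) + (G 1 - c) - (G 2 - c) - (G 3 - c)) - 1 * ((G 0 - c) - (G 1 - c) - (G 2 - c) + (G 3 - c))) + N * (t * ((E 0 - c) + (E 1 - c) - (E 2 - c) - (E 3 - c)) - 1 * ((E 0 - c) - (E 1 - c) - (E 2 - c) + (E 3 - c))) = 0"
    and ei: "M * (1 * ((E 0 - c) + (E 1 - c) - (E 2 - c) - (E 3 - c)) - t * ((E 0 - c) - (E 1 - c) - (E 2 - c) + (E 3 - c))) + N * (t * ((G 0 / t^3 - c) + (G 1 / t^3 - c) - (G 2 / t^3 - c) - (G 3 / t^3 - c)) - t * ((G 0 / t^3 - c) - (G 1 / t^3 - c) - (G 2 / t^3 - c) + (G 3 / t^3 - c))) = 0"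
    and t: "0 < t" and dpos: "0 < (G 1 - G 3)" and P: "0 \<le> ((E 0 + E 1 - E 2 - E 3) - t * (E 0 - E 1 - E 2 + E 3))" and Q: "0 \<le> ((E 0 - E 1 - E 2 + E 3) - t * (E 0 + E 1 - E 2 - E 3))"
  shows "M = 0 \<and> N = 0"
proof (rule cramer)
  show "M * (2 * (G 1 - G 3)) + N * (- ((E 0 - E 1 - E 2 + E 3) - t * (E 0 + E 1 - E 2 - E 3))) = 0" by (rule trans[OF _ eo]) (simp add: algebra_simps)
  show "M * ((E 0 + E 1 - E 2 - E 3) - t * (E 0 - E 1 - E 2 + E 3)) + N * (2 * t * (G 1 / t^3 - G 3 / t^3)) = 0" by (rule trans[OF _ ei]) (simp add: algebra_simps)
  have dp: "(G 1 / t^3 - G 3 / t^3) = (G 1 - G 3) / t^3" by (simp add: diff_divide_distrib add_divide_distrib)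
  have "0 < (G 1 - G 3) * ((G 1 - G 3) / t^3)" using t dpos by simp
  have "0 < 4 * t * ((G 1 - G 3) * (G 1 / t^3 - G 3 / t^3))" unfolding dp using t dpos by (intro mult_pos_pos) auto
  moreover have "0 \<le> ((E 0 + E 1 - E 2 - E 3) - t * (E 0 - E 1 - E 2 + E 3)) * ((E 0 - E 1 - E 2 + E 3) - t * (E 0 + E 1 - E 2 - E 3))" using P Q by simp
  moreover have "(2 * (G 1 - G 3)) * (2 * t * (G 1 / t^3 - G 3 / t^3)) - (- ((E 0 - E 1 - E 2 + E 3) - t * (E 0 + E 1 - E 2 - E 3))) * ((E 0 + E 1 - E 2 - E 3) - t * (E 0 - E 1 - E 2 + E 3)) = 4 * t * ((G 1 - G 3) * (G 1 / t^3 - G 3 / t^3)) + ((E 0 + E 1 - E 2 - E 3) - t * (E 0 - E 1 - E 2 + E 3)) * ((E 0 - E 1 - E 2 + E 3) - t * (E 0 + E 1 - E 2 - E 3))"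
    using t by (simp add: field_simps)
  ultimately show "(2 * (G 1 - G 3)) * (2 * t * (G 1 / t^3 - G 3 / t^3)) - (- ((E 0 - E 1 - E 2 + E 3) - t * (E 0 + E 1 - E 2 - E 3))) * ((E 0 + E 1 - E 2 - E 3) - t * (E 0 - E 1 - E 2 + E 3)) \<noteq> 0" by linarith
qed

lemma class3:
  fixes M N c t :: real and G E :: "nat \<Rightarrow> real"
  assumes eo: "M * (1 * ((G 0 - c) - (G 1 - c) - (G 2 - c) + (G 3 - c)) - 1 * ((G 0 - c) - 3 * (G 1 - c) + 3 * (G 2 - c) - (G 3 - c))) + N * (t * ((E 0 - c) - (E 1 - c) - (E 2 - c) + (E 3 - c)) - 1 * ((E 0 - c) - 3 * (E 1 - c) + 3 * (E 2 - c) - (E 3 - c))) = 0"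
    and ei: "M * (1 * ((E 0 - c) - (E 1 - c) - (E 2 - c) + (E 3 - c)) - t * ((E 0 - c) - 3 * (E 1 - c) + 3 * (E 2 - c) - (E 3 - c))) + N * (t * ((G 0 / t^3 - c) - (G 1 / t^3 - c) - (G 2 / t^3 - c) + (G 3 / t^3 - c)) - t * ((G 0 / t^3 - c) - 3 * (G 1 / t^3 - c) + 3 * (G 2 / t^3 - c) - (G 3 / t^3 - c))) = 0"
    and t: "0 < t" and dpos: "0 < (G 1 - 2 * G 2 + G 3)" and P: "0 \<le> ((E 0 - 3 * E 1 + 3 * E 2 - E 3) - t * (E 0 - E 1 - E 2 + E 3))" and Q: "0 \<le> ((E 0 - E 1 - E 2 + E 3) - t * (E 0 - 3 * E 1 + 3 * E 2 - E 3))"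
  shows "M = 0 \<and> N = 0"
proof (rule cramer)
  show "M * (2 * (G 1 - 2 * G 2 + G 3)) + N * (- ((E 0 - 3 * E 1 + 3 * E 2 - E 3) - t * (E 0 - E 1 - E 2 + E 3))) = 0" by (rule trans[OF _ eo]) (simp add: algebra_simps)
  show "M * ((E 0 - E 1 - E 2 + E 3) - t * (E 0 - 3 * E 1 + 3 * E 2 - E 3)) + N * (2 * t * (G 1 / t^3 - 2 * (G 2 / t^3) + G 3 / t^3)) = 0" by (rule trans[OF _ ei]) (simp add: algebra_simps)
  have dp: "(G 1 / t^3 - 2 * (G 2 / t^3) + G 3 / t^3) = (G 1 - 2 * G 2 + G 3) / t^3" by (simp add: diff_divide_distrib add_divide_distrib)
  have "0 < (G 1 - 2 * G 2 + G 3) * ((G 1 - 2 * G 2 + G 3) / t^3)" using t dpos by simp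
  have "0 < 4 * t * ((G 1 - 2 * G 2 + G 3) * (G 1 / t^3 - 2 * (G 2 / t^3) + G 3 / t^3))" unfolding dp using t dpos by (intro mult_pos_pos) auto
  moreover have "0 \<le> ((E 0 - 3 * E 1 + 3 * E 2 - E 3) - t * (E 0 - E 1 - E 2 + E 3)) * ((E 0 - E 1 - E 2 + E 3) - t * (E 0 - 3 * E 1 + 3 * E 2 - E 3))" using P Q by simp
  moreover have "(2 * (G 1 - 2 * G 2 + G 3)) * (2 * t * (G 1 / t^3 - 2 * (G 2 / t^3) + G 3 / t^3)) - (- ((E 0 - 3 * E 1 + 3 * E 2 - E 3) - t * (E 0 - E 1 - E 2 + E 3))) * ((E 0 - E 1 - E 2 + E 3) - t * (E 0 - 3 * E 1 + 3 * E 2 - E 3)) = 4 * t * ((G 1 - 2 * G 2 + G 3) * (G 1 / t^3 - 2 * (G 2 / t^3) + G 3 / t^3)) + ((E 0 - 3 * E 1 + 3 * E 2 - E 3) - t * (E 0 - E 1 - E 2 + E 3)) * ((E 0 - E 1 - E 2 + E 3) - t * (E 0 - 3 * E 1 + 3 * E 2 - E 3))"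
    using t by (simp add: field_simps)
  ultimately show "(2 * (G 1 - 2 * G 2 + G 3)) * (2 * t * (G 1 / t^3 - 2 * (G 2 / t^3) + G 3 / t^3)) - (- ((E 0 - 3 * E 1 + 3 * E 2 - E 3) - t * (E 0 - E 1 - E 2 + E 3))) * ((E 0 - E 1 - E 2 + E 3) - t * (E 0 - 3 * E 1 + 3 * E 2 - E 3)) \<noteq> 0" by linarith
qed

lemma Gf_facts: "0 < Gf 1 - Gf 3" "0 < Gf 1 - 2 * Gf 2 + Gf 3"
proof -
  have g1: "Gf 1 = 1/8" by (simp add: Gf_def)
  have "1 < sqrt (3::real)" by simp
  then have "1 < sqrt (3::real) ^ 3" by (simp add: one_less_power)
  moreover have "(2 * sqrt (3::real)) ^ 3 = 8 * sqrt 3 ^ 3" by (simp add: power_mult_distrib)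
  ultimately have a3: "8 < (2 * sqrt (3::real)) ^ 3" by simp
  have g3: "Gf 3 = 1 / (2 * sqrt 3) ^ 3" by (simp add: Gf_def)
  have g3p: "0 < Gf 3" unfolding g3 by simp
  have g3l: "Gf 3 < 1/8" unfolding g3 using a3 by (simp add: divide_simps)
  have "sqrt (2::real) ^ 3 = sqrt 2 ^ 2 * sqrt 2" by (simp add: power3_eq_cube power2_eq_square)
  then have "sqrt (2::real) ^ 3 = 2 * sqrt 2" by simp
  then have a2: "(2 * sqrt (2::real)) ^ 3 = 16 * sqrt 2" by (simp add: power_mult_distrib)
  have "1 < sqrt (2::real)" by simp
  then have "16 < (2 * sqrt (2::real)) ^ 3" unfolding a2 by simp
  then have "2 * (1 / (2 * sqrt (2::real)) ^ 3) < 1/8" by (simp add: divide_simps)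
  moreover have "Gf 2 = 1 / (2 * sqrt 2) ^ 3" by (simp add: Gf_def)
  ultimately have g2: "2 * Gf 2 < 1/8" by simp
  show "0 < Gf 1 - Gf 3" using g1 g3l by simp
  show "0 < Gf 1 - 2 * Gf 2 + Gf 3" using g1 g2 g3p by simp
qed

theorem theorem12:
  fixes t :: real and m :: "nat \<Rightarrow> real"
  assumes "0 < t" and "t < 1"
    and "\<forall>i<16. 0 < m i"
    and "central_configuration 16 m (nested_cubes t)"
  shows "(\<forall>i<8. m i = m 0) \<and> (\<forall>i. 8 \<le> i \<and> i < 16 \<longrightarrow> m i = m 8)"
proof -
  have t0: "0 < t" and t1: "t < 1" using assms by auto
  from assms(4) obtain c where hc: "\<forall>i<16. (\<Sum>j\<in>{..<16} - {i}. (m j * (1 / norm (nested_cubes t j - nested_cubes t i) ^ 3 - c)) *\<^sub>R (nested_cubes t j - nested_cubes t i)) = 0"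
    unfolding central_configuration_def by blast
  have EO: "(\<Sum>j<8. m j * (Gf (ham i j) - c) * (1 * cube_vertex j $ k - 1 * cube_vertex i $ k))
       + (\<Sum>j<8. m (j+8) * (Ef t (ham i j) - c) * (t * cube_vertex j $ k - 1 * cube_vertex i $ k)) = 0"
    if i: "i < 8" for i k
  proof -
    have "i < 16" using i by simp
    from eq_out[OF t0 i hc[rule_format, OF this]] show ?thesis .
  qed
  have EI: "(\<Sum>j<8. m j * (Ef t (ham i j) - c) * (1 * cube_vertex j $ k - t * cube_vertex i $ k))
       + (\<Sum>j<8. m (j+8) * (Gf (ham i j) / t^3 - c) * (t * cube_vertex j $ k - t * cube_vertex i $ k)) = 0"
    if i: "i < 8" for i k
  proof -
    have "i + 8 < 16" using i by simp
    from eq_in[OF t0 i hc[rule_format, OF this]] show ?thesis .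
  qed
  note d1 = Gf_facts(1) and d3 = Gf_facts(2)
  have m01: "Ef t 2 \<le> Ef t 0" "Ef t 3 \<le> Ef t 1" "Ef t 2 \<le> Ef t 1"
    using t0 t1 by (auto intro: Ef_mono)
  have P1: "0 \<le> (1-t)*Ef t 0 - (1+t)*Ef t 1 - (1-t)*Ef t 2 + (1+t)*Ef t 3"
    and P2: "0 \<le> (1-t)*Ef t 0 - (3-t)*Ef t 1 + (3+t)*Ef t 2 - (1+t)*Ef t 3"
    using Ef_ineqs[OF t0 t1] by auto
  have X: "0 \<le> ((Ef t 0 + Ef t 1 - Ef t 2 - Ef t 3) - t * (Ef t 0 - Ef t 1 - Ef t 2 + Ef t 3))"
  proof -
    have "((Ef t 0 + Ef t 1 - Ef t 2 - Ef t 3) - t * (Ef t 0 - Ef t 1 - Ef t 2 + Ef t 3))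
        = (1-t) * (Ef t 0 - Ef t 2) + (1+t) * (Ef t 1 - Ef t 3)" by (simp add: algebra_simps)
    moreover have "0 \<le> (1-t) * (Ef t 0 - Ef t 2)" using t1 m01 by simp
    moreover have "0 \<le> (1+t) * (Ef t 1 - Ef t 3)" using t0 m01 by simp
    ultimately show ?thesis by linarith
  qed
  have Y: "0 \<le> ((Ef t 0 - Ef t 1 - Ef t 2 + Ef t 3) - t * (Ef t 0 + Ef t 1 - Ef t 2 - Ef t 3))"
  proof -
    have "((Ef t 0 - Ef t 1 - Ef t 2 + Ef t 3) - t * (Ef t 0 + Ef t 1 - Ef t 2 - Ef t 3))
        = (1-t)*Ef t 0 - (1+t)*Ef t 1 - (1-t)*Ef t 2 + (1+t)*Ef t 3" by (simp add: algebra_simps)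
    with P1 show ?thesis by linarith
  qed
  have Z: "0 \<le> ((Ef t 0 - 3 * Ef t 1 + 3 * Ef t 2 - Ef t 3) - t * (Ef t 0 - Ef t 1 - Ef t 2 + Ef t 3))"
  proof -
    have "((Ef t 0 - 3 * Ef t 1 + 3 * Ef t 2 - Ef t 3) - t * (Ef t 0 - Ef t 1 - Ef t 2 + Ef t 3))
        = (1-t)*Ef t 0 - (3-t)*Ef t 1 + (3+t)*Ef t 2 - (1+t)*Ef t 3" by (simp add: algebra_simps)
    with P2 show ?thesis by linarith
  qed
  have R: "0 \<le> ((Ef t 0 - Ef t 1 - Ef t 2 + Ef t 3) - t * (Ef t 0 - 3 * Ef t 1 + 3 * Ef t 2 - Ef t 3))"
  proof -
    have "((Ef t 0 - Ef t 1 - Ef t 2 + Ef t 3) - t * (Ef t 0 - 3 * Ef t 1 + 3 * Ef t 2 - Ef t 3))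
        = ((Ef t 0 - Ef t 1 - Ef t 2 + Ef t 3) - t * (Ef t 0 + Ef t 1 - Ef t 2 - Ef t 3)) + 4 * (t * (Ef t 1 - Ef t 2))"
      by (simp add: algebra_simps)
    moreover have "0 \<le> t * (Ef t 1 - Ef t 2)" using t0 m01 by simp
    ultimately show ?thesis using Y by linarith
  qed
  have o0: "(\<Sum>i<8. s1 i * s2 i * ((\<Sum>j<8. m j * (Gf (ham i j) - c) * (1 * s2 j - 1 * s2 i))
      + (\<Sum>j<8. m (j+8) * (Ef t (ham i j) - c) * (t * s2 j - 1 * s2 i)))) = 0"
  proof (rule sum.neutral, rule ballI)
    fix i assume "i \<in> {..<8::nat}"
    then have i: "i < 8" by simp
    have "(\<Sum>j<8. m j * (Gf (ham i j) - c) * (1 * s2 j - 1 * s2 i))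
      + (\<Sum>j<8. m (j+8) * (Ef t (ham i j) - c) * (t * s2 j - 1 * s2 i)) = 0"
      using EO[OF i, of 2] unfolding cv_comp .
    then show "s1 i * s2 i * ((\<Sum>j<8. m j * (Gf (ham i j) - c) * (1 * s2 j - 1 * s2 i))
      + (\<Sum>j<8. m (j+8) * (Ef t (ham i j) - c) * (t * s2 j - 1 * s2 i))) = 0"
      by (simp only: mult_zero_right)
  qed
  have i0: "(\<Sum>i<8. s1 i * s2 i * ((\<Sum>j<8. m j * (Ef t (ham i j) - c) * (1 * s2 j - t * s2 i))
      + (\<Sum>j<8. m (j+8) * (Gf (ham i j) / t^3 - c) * (t * s2 j - t * s2 i)))) = 0"
  proof (rule sum.neutral, rule ballI)
    fix i assume "i \<in> {..<8::nat}"
    then have i: "i < 8" by simp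
    have "(\<Sum>j<8. m j * (Ef t (ham i j) - c) * (1 * s2 j - t * s2 i))
      + (\<Sum>j<8. m (j+8) * (Gf (ham i j) / t^3 - c) * (t * s2 j - t * s2 i)) = 0"
      using EI[OF i, of 2] unfolding cv_comp .
    then show "s1 i * s2 i * ((\<Sum>j<8. m j * (Ef t (ham i j) - c) * (1 * s2 j - t * s2 i))
      + (\<Sum>j<8. m (j+8) * (Gf (ham i j) / t^3 - c) * (t * s2 j - t * s2 i))) = 0"
      by (simp only: mult_zero_right)
  qed
  have z0: "(\<Sum>j<8. s1 j * m j) = 0 \<and> (\<Sum>j<8. s1 j * m (j+8)) = 0"
    by (rule class1[where G=Gf and E="Ef t" and M="\<Sum>j<8. s1 j * m j" and N="\<Sum>j<8. s1 j * m (j+8)",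
          OF trans[OF walsh1[where x=m and F="\<lambda>h. Gf h - c" and a=1 and b=1 and y="\<lambda>j. m (j+8)" and H="\<lambda>h. Ef t h - c" and a'=t and b'=1, symmetric] o0]
             trans[OF walsh1[where x=m and F="\<lambda>h. Ef t h - c" and a=1 and b=t and y="\<lambda>j. m (j+8)" and H="\<lambda>h. Gf h / t^3 - c" and a'=t and b'=t, symmetric] i0]
             t0 d1 X Y])
  have o1: "(\<Sum>i<8. s2 i * s3 i * ((\<Sum>j<8. m j * (Gf (ham i j) - c) * (1 * s3 j - 1 * s3 i))
      + (\<Sum>j<8. m (j+8) * (Ef t (ham i j) - c) * (t * s3 j - 1 * s3 i)))) = 0"
  proof (rule sum.neutral, rule ballI)
    fix i assume "i \<in> {..<8::nat}"
    then have i: "i < 8" by simp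
    have "(\<Sum>j<8. m j * (Gf (ham i j) - c) * (1 * s3 j - 1 * s3 i))
      + (\<Sum>j<8. m (j+8) * (Ef t (ham i j) - c) * (t * s3 j - 1 * s3 i)) = 0"
      using EO[OF i, of 3] unfolding cv_comp .
    then show "s2 i * s3 i * ((\<Sum>j<8. m j * (Gf (ham i j) - c) * (1 * s3 j - 1 * s3 i))
      + (\<Sum>j<8. m (j+8) * (Ef t (ham i j) - c) * (t * s3 j - 1 * s3 i))) = 0"
      by (simp only: mult_zero_right)
  qed
  have i1: "(\<Sum>i<8. s2 i * s3 i * ((\<Sum>j<8. m j * (Ef t (ham i j) - c) * (1 * s3 j - t * s3 i))
      + (\<Sum>j<8. m (j+8) * (Gf (ham i j) / t^3 - c) * (t * s3 j - t * s3 i)))) = 0"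
  proof (rule sum.neutral, rule ballI)
    fix i assume "i \<in> {..<8::nat}"
    then have i: "i < 8" by simp
    have "(\<Sum>j<8. m j * (Ef t (ham i j) - c) * (1 * s3 j - t * s3 i))
      + (\<Sum>j<8. m (j+8) * (Gf (ham i j) / t^3 - c) * (t * s3 j - t * s3 i)) = 0"
      using EI[OF i, of 3] unfolding cv_comp .
    then show "s2 i * s3 i * ((\<Sum>j<8. m j * (Ef t (ham i j) - c) * (1 * s3 j - t * s3 i))
      + (\<Sum>j<8. m (j+8) * (Gf (ham i j) / t^3 - c) * (t * s3 j - t * s3 i))) = 0"
      by (simp only: mult_zero_right)
  qed
  have z1: "(\<Sum>j<8. s2 j * m j) = 0 \<and> (\<Sum>j<8. s2 j * m (j+8)) = 0"
    by (rule class1[where G=Gf and E="Ef t" and M="\<Sum>j<8. s2 j * m j" and N="\<Sum>j<8. s2 j * m (j+8)",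
          OF trans[OF walsh2[where x=m and F="\<lambda>h. Gf h - c" and a=1 and b=1 and y="\<lambda>j. m (j+8)" and H="\<lambda>h. Ef t h - c" and a'=t and b'=1, symmetric] o1]
             trans[OF walsh2[where x=m and F="\<lambda>h. Ef t h - c" and a=1 and b=t and y="\<lambda>j. m (j+8)" and H="\<lambda>h. Gf h / t^3 - c" and a'=t and b'=t, symmetric] i1]
             t0 d1 X Y])
  have o2: "(\<Sum>i<8. s3 i * s1 i * ((\<Sum>j<8. m j * (Gf (ham i j) - c) * (1 * s1 j - 1 * s1 i))
      + (\<Sum>j<8. m (j+8) * (Ef t (ham i j) - c) * (t * s1 j - 1 * s1 i)))) = 0"
  proof (rule sum.neutral, rule ballI)
    fix i assume "i \<in> {..<8::nat}"
    then have i: "i < 8" by simp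
    have "(\<Sum>j<8. m j * (Gf (ham i j) - c) * (1 * s1 j - 1 * s1 i))
      + (\<Sum>j<8. m (j+8) * (Ef t (ham i j) - c) * (t * s1 j - 1 * s1 i)) = 0"
      using EO[OF i, of 1] unfolding cv_comp .
    then show "s3 i * s1 i * ((\<Sum>j<8. m j * (Gf (ham i j) - c) * (1 * s1 j - 1 * s1 i))
      + (\<Sum>j<8. m (j+8) * (Ef t (ham i j) - c) * (t * s1 j - 1 * s1 i))) = 0"
      by (simp only: mult_zero_right)
  qed
  have i2: "(\<Sum>i<8. s3 i * s1 i * ((\<Sum>j<8. m j * (Ef t (ham i j) - c) * (1 * s1 j - t * s1 i))
      + (\<Sum>j<8. m (j+8) * (Gf (ham i j) / t^3 - c) * (t * s1 j - t * s1 i)))) = 0"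
  proof (rule sum.neutral, rule ballI)
    fix i assume "i \<in> {..<8::nat}"
    then have i: "i < 8" by simp
    have "(\<Sum>j<8. m j * (Ef t (ham i j) - c) * (1 * s1 j - t * s1 i))
      + (\<Sum>j<8. m (j+8) * (Gf (ham i j) / t^3 - c) * (t * s1 j - t * s1 i)) = 0"
      using EI[OF i, of 1] unfolding cv_comp .
    then show "s3 i * s1 i * ((\<Sum>j<8. m j * (Ef t (ham i j) - c) * (1 * s1 j - t * s1 i))
      + (\<Sum>j<8. m (j+8) * (Gf (ham i j) / t^3 - c) * (t * s1 j - t * s1 i))) = 0"
      by (simp only: mult_zero_right)
  qed
  have z2: "(\<Sum>j<8. s3 j * m j) = 0 \<and> (\<Sum>j<8. s3 j * m (j+8)) = 0"
    by (rule class1[where G=Gf and E="Ef t" and M="\<Sum>j<8. s3 j * m j" and N="\<Sum>j<8. s3 j * m (j+8)",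
          OF trans[OF walsh3[where x=m and F="\<lambda>h. Gf h - c" and a=1 and b=1 and y="\<lambda>j. m (j+8)" and H="\<lambda>h. Ef t h - c" and a'=t and b'=1, symmetric] o2]
             trans[OF walsh3[where x=m and F="\<lambda>h. Ef t h - c" and a=1 and b=t and y="\<lambda>j. m (j+8)" and H="\<lambda>h. Gf h / t^3 - c" and a'=t and b'=t, symmetric] i2]
             t0 d1 X Y])
  have o3: "(\<Sum>i<8. s1 i * s2 i * s1 i * ((\<Sum>j<8. m j * (Gf (ham i j) - c) * (1 * s1 j - 1 * s1 i))
      + (\<Sum>j<8. m (j+8) * (Ef t (ham i j) - c) * (t * s1 j - 1 * s1 i)))) = 0"
  proof (rule sum.neutral, rule ballI)
    fix i assume "i \<in> {..<8::nat}"
    then have i: "i < 8" by simp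
    have "(\<Sum>j<8. m j * (Gf (ham i j) - c) * (1 * s1 j - 1 * s1 i))
      + (\<Sum>j<8. m (j+8) * (Ef t (ham i j) - c) * (t * s1 j - 1 * s1 i)) = 0"
      using EO[OF i, of 1] unfolding cv_comp .
    then show "s1 i * s2 i * s1 i * ((\<Sum>j<8. m j * (Gf (ham i j) - c) * (1 * s1 j - 1 * s1 i))
      + (\<Sum>j<8. m (j+8) * (Ef t (ham i j) - c) * (t * s1 j - 1 * s1 i))) = 0"
      by (simp only: mult_zero_right)
  qed
  have i3: "(\<Sum>i<8. s1 i * s2 i * s1 i * ((\<Sum>j<8. m j * (Ef t (ham i j) - c) * (1 * s1 j - t * s1 i))
      + (\<Sum>j<8. m (j+8) * (Gf (ham i j) / t^3 - c) * (t * s1 j - t * s1 i)))) = 0"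
  proof (rule sum.neutral, rule ballI)
    fix i assume "i \<in> {..<8::nat}"
    then have i: "i < 8" by simp
    have "(\<Sum>j<8. m j * (Ef t (ham i j) - c) * (1 * s1 j - t * s1 i))
      + (\<Sum>j<8. m (j+8) * (Gf (ham i j) / t^3 - c) * (t * s1 j - t * s1 i)) = 0"
      using EI[OF i, of 1] unfolding cv_comp .
    then show "s1 i * s2 i * s1 i * ((\<Sum>j<8. m j * (Ef t (ham i j) - c) * (1 * s1 j - t * s1 i))
      + (\<Sum>j<8. m (j+8) * (Gf (ham i j) / t^3 - c) * (t * s1 j - t * s1 i))) = 0"
      by (simp only: mult_zero_right)
  qed
  have z3: "(\<Sum>j<8. s1 j * s2 j * m j) = 0 \<and> (\<Sum>j<8. s1 j * s2 j * m (j+8)) = 0"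
    by (rule class2[where G=Gf and E="Ef t" and M="\<Sum>j<8. s1 j * s2 j * m j" and N="\<Sum>j<8. s1 j * s2 j * m (j+8)",
          OF trans[OF walsh12[where x=m and F="\<lambda>h. Gf h - c" and a=1 and b=1 and y="\<lambda>j. m (j+8)" and H="\<lambda>h. Ef t h - c" and a'=t and b'=1, symmetric] o3]
             trans[OF walsh12[where x=m and F="\<lambda>h. Ef t h - c" and a=1 and b=t and y="\<lambda>j. m (j+8)" and H="\<lambda>h. Gf h / t^3 - c" and a'=t and b'=t, symmetric] i3]
             t0 d1 X Y])
  have o4: "(\<Sum>i<8. s1 i * s3 i * s1 i * ((\<Sum>j<8. m j * (Gf (ham i j) - c) * (1 * s1 j - 1 * s1 i))
      + (\<Sum>j<8. m (j+8) * (Ef t (ham i j) - c) * (t * s1 j - 1 * s1 i)))) = 0"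
  proof (rule sum.neutral, rule ballI)
    fix i assume "i \<in> {..<8::nat}"
    then have i: "i < 8" by simp
    have "(\<Sum>j<8. m j * (Gf (ham i j) - c) * (1 * s1 j - 1 * s1 i))
      + (\<Sum>j<8. m (j+8) * (Ef t (ham i j) - c) * (t * s1 j - 1 * s1 i)) = 0"
      using EO[OF i, of 1] unfolding cv_comp .
    then show "s1 i * s3 i * s1 i * ((\<Sum>j<8. m j * (Gf (ham i j) - c) * (1 * s1 j - 1 * s1 i))
      + (\<Sum>j<8. m (j+8) * (Ef t (ham i j) - c) * (t * s1 j - 1 * s1 i))) = 0"
      by (simp only: mult_zero_right)
  qed
  have i4: "(\<Sum>i<8. s1 i * s3 i * s1 i * ((\<Sum>j<8. m j * (Ef t (ham i j) - c) * (1 * s1 j - t * s1 i))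
      + (\<Sum>j<8. m (j+8) * (Gf (ham i j) / t^3 - c) * (t * s1 j - t * s1 i)))) = 0"
  proof (rule sum.neutral, rule ballI)
    fix i assume "i \<in> {..<8::nat}"
    then have i: "i < 8" by simp
    have "(\<Sum>j<8. m j * (Ef t (ham i j) - c) * (1 * s1 j - t * s1 i))
      + (\<Sum>j<8. m (j+8) * (Gf (ham i j) / t^3 - c) * (t * s1 j - t * s1 i)) = 0"
      using EI[OF i, of 1] unfolding cv_comp .
    then show "s1 i * s3 i * s1 i * ((\<Sum>j<8. m j * (Ef t (ham i j) - c) * (1 * s1 j - t * s1 i))
      + (\<Sum>j<8. m (j+8) * (Gf (ham i j) / t^3 - c) * (t * s1 j - t * s1 i))) = 0"
      by (simp only: mult_zero_right)
  qed
  have z4: "(\<Sum>j<8. s1 j * s3 j * m j) = 0 \<and> (\<Sum>j<8. s1 j * s3 j * m (j+8)) = 0"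
    by (rule class2[where G=Gf and E="Ef t" and M="\<Sum>j<8. s1 j * s3 j * m j" and N="\<Sum>j<8. s1 j * s3 j * m (j+8)",
          OF trans[OF walsh13[where x=m and F="\<lambda>h. Gf h - c" and a=1 and b=1 and y="\<lambda>j. m (j+8)" and H="\<lambda>h. Ef t h - c" and a'=t and b'=1, symmetric] o4]
             trans[OF walsh13[where x=m and F="\<lambda>h. Ef t h - c" and a=1 and b=t and y="\<lambda>j. m (j+8)" and H="\<lambda>h. Gf h / t^3 - c" and a'=t and b'=t, symmetric] i4]
             t0 d1 X Y])
  have o5: "(\<Sum>i<8. s2 i * s3 i * s2 i * ((\<Sum>j<8. m j * (Gf (ham i j) - c) * (1 * s2 j - 1 * s2 i))
      + (\<Sum>j<8. m (j+8) * (Ef t (ham i j) - c) * (t * s2 j - 1 * s2 i)))) = 0"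
  proof (rule sum.neutral, rule ballI)
    fix i assume "i \<in> {..<8::nat}"
    then have i: "i < 8" by simp
    have "(\<Sum>j<8. m j * (Gf (ham i j) - c) * (1 * s2 j - 1 * s2 i))
      + (\<Sum>j<8. m (j+8) * (Ef t (ham i j) - c) * (t * s2 j - 1 * s2 i)) = 0"
      using EO[OF i, of 2] unfolding cv_comp .
    then show "s2 i * s3 i * s2 i * ((\<Sum>j<8. m j * (Gf (ham i j) - c) * (1 * s2 j - 1 * s2 i))
      + (\<Sum>j<8. m (j+8) * (Ef t (ham i j) - c) * (t * s2 j - 1 * s2 i))) = 0"
      by (simp only: mult_zero_right)
  qed
  have i5: "(\<Sum>i<8. s2 i * s3 i * s2 i * ((\<Sum>j<8. m j * (Ef t (ham i j) - c) * (1 * s2 j - t * s2 i))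
      + (\<Sum>j<8. m (j+8) * (Gf (ham i j) / t^3 - c) * (t * s2 j - t * s2 i)))) = 0"
  proof (rule sum.neutral, rule ballI)
    fix i assume "i \<in> {..<8::nat}"
    then have i: "i < 8" by simp
    have "(\<Sum>j<8. m j * (Ef t (ham i j) - c) * (1 * s2 j - t * s2 i))
      + (\<Sum>j<8. m (j+8) * (Gf (ham i j) / t^3 - c) * (t * s2 j - t * s2 i)) = 0"
      using EI[OF i, of 2] unfolding cv_comp .
    then show "s2 i * s3 i * s2 i * ((\<Sum>j<8. m j * (Ef t (ham i j) - c) * (1 * s2 j - t * s2 i))
      + (\<Sum>j<8. m (j+8) * (Gf (ham i j) / t^3 - c) * (t * s2 j - t * s2 i))) = 0"
      by (simp only: mult_zero_right)
  qed
  have z5: "(\<Sum>j<8. s2 j * s3 j * m j) = 0 \<and> (\<Sum>j<8. s2 j * s3 j * m (j+8)) = 0"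
    by (rule class2[where G=Gf and E="Ef t" and M="\<Sum>j<8. s2 j * s3 j * m j" and N="\<Sum>j<8. s2 j * s3 j * m (j+8)",
          OF trans[OF walsh23[where x=m and F="\<lambda>h. Gf h - c" and a=1 and b=1 and y="\<lambda>j. m (j+8)" and H="\<lambda>h. Ef t h - c" and a'=t and b'=1, symmetric] o5]
             trans[OF walsh23[where x=m and F="\<lambda>h. Ef t h - c" and a=1 and b=t and y="\<lambda>j. m (j+8)" and H="\<lambda>h. Gf h / t^3 - c" and a'=t and b'=t, symmetric] i5]
             t0 d1 X Y])
  have o6: "(\<Sum>i<8. s1 i * s2 i * s3 i * s1 i * ((\<Sum>j<8. m j * (Gf (ham i j) - c) * (1 * s1 j - 1 * s1 i))
      + (\<Sum>j<8. m (j+8) * (Ef t (ham i j) - c) * (t * s1 j - 1 * s1 i)))) = 0"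
  proof (rule sum.neutral, rule ballI)
    fix i assume "i \<in> {..<8::nat}"
    then have i: "i < 8" by simp
    have "(\<Sum>j<8. m j * (Gf (ham i j) - c) * (1 * s1 j - 1 * s1 i))
      + (\<Sum>j<8. m (j+8) * (Ef t (ham i j) - c) * (t * s1 j - 1 * s1 i)) = 0"
      using EO[OF i, of 1] unfolding cv_comp .
    then show "s1 i * s2 i * s3 i * s1 i * ((\<Sum>j<8. m j * (Gf (ham i j) - c) * (1 * s1 j - 1 * s1 i))
      + (\<Sum>j<8. m (j+8) * (Ef t (ham i j) - c) * (t * s1 j - 1 * s1 i))) = 0"
      by (simp only: mult_zero_right)
  qed
  have i6: "(\<Sum>i<8. s1 i * s2 i * s3 i * s1 i * ((\<Sum>j<8. m j * (Ef t (ham i j) - c) * (1 * s1 j - t * s1 i))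
      + (\<Sum>j<8. m (j+8) * (Gf (ham i j) / t^3 - c) * (t * s1 j - t * s1 i)))) = 0"
  proof (rule sum.neutral, rule ballI)
    fix i assume "i \<in> {..<8::nat}"
    then have i: "i < 8" by simp
    have "(\<Sum>j<8. m j * (Ef t (ham i j) - c) * (1 * s1 j - t * s1 i))
      + (\<Sum>j<8. m (j+8) * (Gf (ham i j) / t^3 - c) * (t * s1 j - t * s1 i)) = 0"
      using EI[OF i, of 1] unfolding cv_comp .
    then show "s1 i * s2 i * s3 i * s1 i * ((\<Sum>j<8. m j * (Ef t (ham i j) - c) * (1 * s1 j - t * s1 i))
      + (\<Sum>j<8. m (j+8) * (Gf (ham i j) / t^3 - c) * (t * s1 j - t * s1 i))) = 0"
      by (simp only: mult_zero_right)
  qed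
  have z6: "(\<Sum>j<8. s1 j * s2 j * s3 j * m j) = 0 \<and> (\<Sum>j<8. s1 j * s2 j * s3 j * m (j+8)) = 0"
    by (rule class3[where G=Gf and E="Ef t" and M="\<Sum>j<8. s1 j * s2 j * s3 j * m j" and N="\<Sum>j<8. s1 j * s2 j * s3 j * m (j+8)",
          OF trans[OF walsh123[where x=m and F="\<lambda>h. Gf h - c" and a=1 and b=1 and y="\<lambda>j. m (j+8)" and H="\<lambda>h. Ef t h - c" and a'=t and b'=1, symmetric] o6]
             trans[OF walsh123[where x=m and F="\<lambda>h. Ef t h - c" and a=1 and b=t and y="\<lambda>j. m (j+8)" and H="\<lambda>h. Gf h / t^3 - c" and a'=t and b'=t, symmetric] i6]
             t0 d3 Z R])

  have L: "m 0 - m 1 + m 2 - m 3 + m 4 - m 5 + m 6 - m 7 = 0"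
          "m 0 + m 1 - m 2 - m 3 + m 4 + m 5 - m 6 - m 7 = 0"
          "m 0 + m 1 + m 2 + m 3 - m 4 - m 5 - m 6 - m 7 = 0"
          "m 0 - m 1 - m 2 + m 3 + m 4 - m 5 - m 6 + m 7 = 0"
          "m 0 - m 1 + m 2 - m 3 - m 4 + m 5 - m 6 + m 7 = 0"
          "m 0 + m 1 - m 2 - m 3 - m 4 - m 5 + m 6 + m 7 = 0"
          "m 0 - m 1 - m 2 + m 3 - m 4 + m 5 + m 6 - m 7 = 0"
    using z0 z1 z2 z3 z4 z5 z6 by (simp_all add: eight s1_def s2_def s3_def algebra_simps)
  have L2: "m 8 - m 9 + m 10 - m 11 + m 12 - m 13 + m 14 - m 15 = 0"
          "m 8 + m 9 - m 10 - m 11 + m 12 + m 13 - m 14 - m 15 = 0"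
          "m 8 + m 9 + m 10 + m 11 - m 12 - m 13 - m 14 - m 15 = 0"
          "m 8 - m 9 - m 10 + m 11 + m 12 - m 13 - m 14 + m 15 = 0"
          "m 8 - m 9 + m 10 - m 11 - m 12 + m 13 - m 14 + m 15 = 0"
          "m 8 + m 9 - m 10 - m 11 - m 12 - m 13 + m 14 + m 15 = 0"
          "m 8 - m 9 - m 10 + m 11 - m 12 + m 13 + m 14 - m 15 = 0"
    using z0 z1 z2 z3 z4 z5 z6 by (simp_all add: eight s1_def s2_def s3_def algebra_simps)
  show ?thesis
  proof (intro conjI allI impI)
    fix i :: nat assume "i < 8"
    then have "i \<in> {0,1,2,3,4,5,6,7}" unfolding eight[symmetric] by simp
    then show "m i = m 0" using L by auto
  next
    fix i :: nat assume "8 \<le> i \<and> i < 16"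
    then have "i \<in> {8,9,10,11,12,13,14,15}" by auto
    then show "m i = m 8" using L2 by auto
  qed
qed

end
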